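(* Consider an instance of the unique games problem: a graph $G=(V,E)$ with $|V|=n$ vertices, positive edge weights $w_{ij}>0$ for $(i,j)\in E$, a number of labels $k\ge 2$, and for each edge $(i,j)\in E$ a permutation $\sigma_{ij}$ of $\{1,\dots,k\}$. A labeling assigns to each vertex $i\in V$ a label $r_i\in\{1,\dots,k\}$; an edge $(i,j)$ is matched if $r_j=\sigma_{ij}(r_i)$, and the value of the labeling is the sum of $w_{ij}$ over matched edges. Let $z^*$ be the maximum value over all labelings. Let (P1) be the problem $$\text{maximize } E[z]=\frac14\sum_{(i,j)\in E}\sum_{r=1}^k w_{ij}\big(1+y_{ir}+y_{j\sigma_{ij}(r)}+y_{ir}y_{j\sigma_{ij}(r)}\big)$$ subject to $\sum_{r=1}^k y_{ir}=2-k$ for all $i\in V$, and $-1\le y_{ir}\le 1$ for all $r=1,\dots,k$, $i\in V$. Then (P1) is a continuous extension of the unique games problem: its objective is defined for all feasible $y$, and for every labeling $(r_i)_{i\in V}$ the point with $y_{ir_i}=1$ and $y_{ir}=-1$ for $r\ne r_i$ is feasible with objective value equal to the value of the labeling. Moreover, (1) an optimal solution of (P1) is attained with $y_{ir}\in\{-1,1\}$ for all $i,r$, and (2) the optimal value of (P1) equals $z^*$.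
   Context: The variables $y_{ir}$ correspond to probabilities $p_{ir}=\frac12(1+y_{ir})$ with which a randomized algorithm independently assigns label $r$ to vertex $i$; $E[z]$ is the expected total weight of matched edges under this randomized assignment. *)

theory Defs
  imports Complex_Main "HOL-Combinatorics.Permutations"
begin

text \<open>Edges are given as a set E of ordered pairs (i,j) (each edge listed once),
  sigma i j is the permutation attached to edge (i,j), w (i,j) its weight.\<close>

definition is_labeling :: "'a set \<Rightarrow> nat \<Rightarrow> ('a \<Rightarrow> nat) \<Rightarrow> bool" where
  "is_labeling V k r \<longleftrightarrow> (\<forall>i\<in>V. r i \<in> {1..k})"

definition labeling_value ::
  "('a \<times> 'a) set \<Rightarrow> ('a \<times> 'a \<Rightarrow> real) \<Rightarrow> ('a \<Rightarrow> 'a \<Rightarrow> nat \<Rightarrow> nat) \<Rightarrow> ('a \<Rightarrow> nat) \<Rightarrow> real" where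
  "labeling_value E w \<sigma> r = (\<Sum>(i,j)\<in>E. if r j = \<sigma> i j (r i) then w (i,j) else 0)"

definition ug_opt ::
  "'a set \<Rightarrow> ('a \<times> 'a) set \<Rightarrow> ('a \<times> 'a \<Rightarrow> real) \<Rightarrow> nat \<Rightarrow> ('a \<Rightarrow> 'a \<Rightarrow> nat \<Rightarrow> nat) \<Rightarrow> real" where
  "ug_opt V E w k \<sigma> = Max {labeling_value E w \<sigma> r | r. is_labeling V k r}"

definition P1_objective ::
  "('a \<times> 'a) set \<Rightarrow> ('a \<times> 'a \<Rightarrow> real) \<Rightarrow> nat \<Rightarrow> ('a \<Rightarrow> 'a \<Rightarrow> nat \<Rightarrow> nat) \<Rightarrow> ('a \<Rightarrow> nat \<Rightarrow> real) \<Rightarrow> real" where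
  "P1_objective E w k \<sigma> y = (1/4) * (\<Sum>(i,j)\<in>E. \<Sum>r=1..k.
      w (i,j) * (1 + y i r + y j (\<sigma> i j r) + y i r * y j (\<sigma> i j r)))"

definition P1_feasible :: "'a set \<Rightarrow> nat \<Rightarrow> ('a \<Rightarrow> nat \<Rightarrow> real) \<Rightarrow> bool" where
  "P1_feasible V k y \<longleftrightarrow>
     (\<forall>i\<in>V. (\<Sum>r=1..k. y i r) = 2 - real k) \<and>
     (\<forall>i\<in>V. \<forall>r\<in>{1..k}. -1 \<le> y i r \<and> y i r \<le> 1)"

definition labeling_point :: "('a \<Rightarrow> nat) \<Rightarrow> 'a \<Rightarrow> nat \<Rightarrow> real" where
  "labeling_point r = (\<lambda>i s. if s = r i then 1 else -1)"

end

theory Submission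
  imports Defs
begin

definition pt :: "nat \<Rightarrow> nat \<Rightarrow> real" where "pt s = (\<lambda>t. if t = s then 1 else -1)"

lemma obj_alt: "P1_objective E w k \<sigma> y = (1/4) * (\<Sum>(i,j)\<in>E. w(i,j) * (\<Sum>t=1..k. (1 + y i t) * (1 + y j (\<sigma> i j t))))"
  unfolding P1_objective_def by (auto intro!: sum.cong simp: sum_distrib_left algebra_simps)

lemma edge_lin:
  assumes "i \<noteq> j" "\<sigma> permutes {1..k}" "(\<Sum>s=1..k. y v s) = 2 - real k"
  shows "(\<Sum>t=1..k. (1 + y i t) * (1 + y j (\<sigma> t))) = (\<Sum>s=1..k. ((1 + y v s)/2) * (\<Sum>t=1..k. (1 + (y(v:=pt s)) i t) * (1 + (y(v:=pt s)) j (\<sigma> t))))"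
proof (cases "v = i")
  case True
  have "(\<Sum>t=1..k. (1 + (y(v:=pt s)) i t) * (1 + (y(v:=pt s)) j (\<sigma> t))) = 2 * (1 + y j (\<sigma> s))"
    if "s \<in> {1..k}" for s
  proof -
    have "(\<Sum>t=1..k. (1 + (y(v:=pt s)) i t) * (1 + (y(v:=pt s)) j (\<sigma> t)))
        = (\<Sum>t=1..k. if t = s then 2 * (1 + y j (\<sigma> s)) else 0)"
      using True assms(1) by (intro sum.cong) (auto simp: pt_def)
    also have "\<dots> = 2 * (1 + y j (\<sigma> s))" using that by simp
    finally show ?thesis .
  qed
  then have "(\<Sum>s=1..k. ((1 + y v s)/2) * (\<Sum>t=1..k. (1 + (y(v:=pt s)) i t) * (1 + (y(v:=pt s)) j (\<sigma> t))))
     = (\<Sum>s=1..k. ((1 + y v s)/2) * (2 * (1 + y j (\<sigma> s))))" by (intro sum.cong) auto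
  also have "\<dots> = (\<Sum>t=1..k. (1 + y i t) * (1 + y j (\<sigma> t)))" using True by (intro sum.cong) auto
  finally show ?thesis by simp
next
  case vi: False
  show ?thesis
  proof (cases "v = j")
    case True
    have "(\<Sum>s=1..k. ((1 + y v s)/2) * (\<Sum>t=1..k. (1 + (y(v:=pt s)) i t) * (1 + (y(v:=pt s)) j (\<sigma> t))))
       = (\<Sum>s=1..k. \<Sum>t=1..k. (if \<sigma> t = s then (1 + y j s) * (1 + y i t) else 0))"
      using True vi by (intro sum.cong) (auto simp: pt_def sum_distrib_left intro!: sum.cong)
    also have "\<dots> = (\<Sum>t=1..k. \<Sum>s=1..k. (if \<sigma> t = s then (1 + y j s) * (1 + y i t) else 0))"
      by (rule sum.swap)
    also have "\<dots> = (\<Sum>t=1..k. (1 + y i t) * (1 + y j (\<sigma> t)))"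
    proof (intro sum.cong refl)
      fix t assume "t \<in> {1..k}"
      then have "\<sigma> t \<in> {1..k}" using assms(2) permutes_in_image by metis
      then show "(\<Sum>s=1..k. (if \<sigma> t = s then (1 + y j s) * (1 + y i t) else 0)) = (1 + y i t) * (1 + y j (\<sigma> t))"
        by simp
    qed
    finally show ?thesis by simp
  next
    case False
    have "(\<Sum>s=1..k. ((1 + y v s)/2) * (\<Sum>t=1..k. (1 + (y(v:=pt s)) i t) * (1 + (y(v:=pt s)) j (\<sigma> t))))
       = (\<Sum>s=1..k. ((1 + y v s)/2)) * (\<Sum>t=1..k. (1 + y i t) * (1 + y j (\<sigma> t)))"
      using False vi by (simp add: sum_distrib_right)
    also have "(\<Sum>s=1..k. ((1 + y v s)/2)) = 1"
      using assms(3) by (simp add: sum_divide_distrib[symmetric] sum.distrib)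
    finally show ?thesis by simp
  qed
qed

lemma sum_case_mult: "(\<Sum>x\<in>E. (case x of (i,j) \<Rightarrow> (c::real) * f i j)) = c * (\<Sum>x\<in>E. case x of (i,j) \<Rightarrow> f i j)"
  by (simp add: sum_distrib_left case_prod_beta')

lemma obj_lin:
  assumes "\<forall>(i,j)\<in>E. i \<noteq> j" "\<forall>(i,j)\<in>E. \<sigma> i j permutes {1..k}" "(\<Sum>s=1..k. y v s) = 2 - real k"
  shows "P1_objective E w k \<sigma> y = (\<Sum>s=1..k. ((1 + y v s)/2) * P1_objective E w k \<sigma> (y(v:=pt s)))"
proof -
  have "P1_objective E w k \<sigma> y = (1/4) * (\<Sum>(i,j)\<in>E. w(i,j) * (\<Sum>s=1..k. ((1 + y v s)/2) * (\<Sum>t=1..k. (1 + (y(v:=pt s)) i t) * (1 + (y(v:=pt s)) j (\<sigma> i j t)))))"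
    unfolding obj_alt
  proof (intro arg_cong[where f="\<lambda>x. (1/4) * x"] sum.cong refl, clarify)
    fix i j assume "(i,j) \<in> E"
    then have "i \<noteq> j" "\<sigma> i j permutes {1..k}" using assms(1,2) by auto
    from edge_lin[where y=y and v=v, OF this assms(3)]
    show "w (i, j) * (\<Sum>t = 1..k. (1 + y i t) * (1 + y j (\<sigma> i j t))) = w (i, j) * (\<Sum>s=1..k. ((1 + y v s)/2) * (\<Sum>t=1..k. (1 + (y(v:=pt s)) i t) * (1 + (y(v:=pt s)) j (\<sigma> i j t))))"
      by simp
  qed
  also have "\<dots> = (1/4) * (\<Sum>(i,j)\<in>E. \<Sum>s=1..k. ((1 + y v s)/2) * (w(i,j) * (\<Sum>t=1..k. (1 + (y(v:=pt s)) i t) * (1 + (y(v:=pt s)) j (\<sigma> i j t)))))"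
    by (auto intro!: sum.cong simp: sum_distrib_left)
  also have "\<dots> = (1/4) * (\<Sum>s=1..k. \<Sum>(i,j)\<in>E. ((1 + y v s)/2) * (w(i,j) * (\<Sum>t=1..k. (1 + (y(v:=pt s)) i t) * (1 + (y(v:=pt s)) j (\<sigma> i j t)))))"
    by (subst sum.swap) (simp add: case_prod_beta')
  also have "\<dots> = (\<Sum>s=1..k. ((1 + y v s)/2) * P1_objective E w k \<sigma> (y(v:=pt s)))"
    unfolding obj_alt
  proof -
    have "(1/4) * (\<Sum>s=1..k. \<Sum>(i,j)\<in>E. ((1 + y v s)/2) * (w(i,j) * (\<Sum>t=1..k. (1 + (y(v:=pt s)) i t) * (1 + (y(v:=pt s)) j (\<sigma> i j t))))) = (1/4) * (\<Sum>s=1..k. ((1 + y v s)/2) * (\<Sum>(i,j)\<in>E. (w(i,j) * (\<Sum>t=1..k. (1 + (y(v:=pt s)) i t) * (1 + (y(v:=pt s)) j (\<sigma> i j t))))))"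
      by (simp only: sum_case_mult)
    also have "\<dots> = (\<Sum>s=1..k. ((1 + y v s)/2) * ((1/4) * (\<Sum>(i,j)\<in>E. (w(i,j) * (\<Sum>t=1..k. (1 + (y(v:=pt s)) i t) * (1 + (y(v:=pt s)) j (\<sigma> i j t)))))))"
      by (subst sum_distrib_left) (intro sum.cong refl, rule mult.left_commute)
    finally show "(1/4) * (\<Sum>s=1..k. \<Sum>(i,j)\<in>E. ((1 + y v s)/2) * (w(i,j) * (\<Sum>t=1..k. (1 + (y(v:=pt s)) i t) * (1 + (y(v:=pt s)) j (\<sigma> i j t))))) = (\<Sum>s=1..k. ((1 + y v s)/2) * ((1/4) * (\<Sum>(i,j)\<in>E. (w(i,j) * (\<Sum>t=1..k. (1 + (y(v:=pt s)) i t) * (1 + (y(v:=pt s)) j (\<sigma> i j t)))))))" .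
  qed
  finally show ?thesis .
qed

lemma avg_le:
  assumes "finite A" "A \<noteq> {}" "\<forall>a\<in>A. p a \<ge> (0::real)" "(\<Sum>a\<in>A. p a) = 1"
  shows "\<exists>a\<in>A. (\<Sum>b\<in>A. p b * f b) \<le> f a"
proof -
  have "Max (f ` A) \<in> f ` A" using assms(1,2) by simp
  then obtain a where a: "a \<in> A" "f a = Max (f ` A)" by (metis imageE)
  have "(\<Sum>b\<in>A. p b * f b) \<le> (\<Sum>b\<in>A. p b * f a)"
    using assms a by (intro sum_mono mult_left_mono) auto
  also have "\<dots> = f a" using assms(4) by (simp add: sum_distrib_right[symmetric])
  finally show ?thesis using a by blast
qed

lemma better:
  assumes "\<forall>(i,j)\<in>E. i \<noteq> j" "\<forall>(i,j)\<in>E. \<sigma> i j permutes {1..k}" "P1_feasible V k y" "v \<in> V" "k \<ge> 1"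
  shows "\<exists>s\<in>{1..k}. P1_objective E w k \<sigma> y \<le> P1_objective E w k \<sigma> (y(v:=pt s)) \<and> P1_feasible V k (y(v:=pt s))"
proof -
  have sv: "(\<Sum>s=1..k. y v s) = 2 - real k" and bd: "\<forall>s\<in>{1..k}. -1 \<le> y v s"
    using assms(3,4) unfolding P1_feasible_def by auto
  have "(\<Sum>s=1..k. (1 + y v s)/2) = 1"
    using sv by (simp add: sum_divide_distrib[symmetric] sum.distrib)
  then obtain s where s: "s \<in> {1..k}" "(\<Sum>b=1..k. ((1 + y v b)/2) * P1_objective E w k \<sigma> (y(v:=pt b))) \<le> P1_objective E w k \<sigma> (y(v:=pt s))"
    using avg_le[of "{1..k}" "\<lambda>b. (1 + y v b)/2" "\<lambda>b. P1_objective E w k \<sigma> (y(v:=pt b))"] bd assms(5)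
    by fastforce
  have "(\<Sum>t=1..k. pt s t) = 2 - real k"
  proof -
    have "(\<Sum>t=1..k. pt s t) = (\<Sum>t=1..k. (if t = s then 2 else 0) + (-1::real))"
      by (intro sum.cong) (auto simp: pt_def)
    also have "\<dots> = 2 - real k" using s(1) by (simp add: sum.distrib sum_subtractf)
    finally show ?thesis .
  qed
  then have "P1_feasible V k (y(v:=pt s))"
    using assms(3) unfolding P1_feasible_def by (auto simp: pt_def)
  then show ?thesis using s obj_lin[where y=y and v=v and w=w, OF assms(1,2) sv] by auto
qed

lemma integralize:
  assumes "\<forall>(i,j)\<in>E. i \<noteq> j" "\<forall>(i,j)\<in>E. \<sigma> i j permutes {1..k}" "k \<ge> 1" "finite S"
  shows "\<forall>y. P1_feasible V k y \<and> (\<forall>i\<in>V-S. \<exists>s\<in>{1..k}. y i = pt s) \<longrightarrow>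
     (\<exists>y'. P1_feasible V k y' \<and> (\<forall>i\<in>V. \<exists>s\<in>{1..k}. y' i = pt s) \<and> P1_objective E w k \<sigma> y \<le> P1_objective E w k \<sigma> y')"
  using assms(4)
proof (induction S rule: finite_induct)
  case empty
  then show ?case by auto
next
  case (insert v S)
  show ?case
  proof (intro allI impI, elim conjE)
    fix y assume fy: "P1_feasible V k y" and iy: "\<forall>i\<in>V - insert v S. \<exists>s\<in>{1..k}. y i = pt s"
    show "\<exists>y'. P1_feasible V k y' \<and> (\<forall>i\<in>V. \<exists>s\<in>{1..k}. y' i = pt s) \<and> P1_objective E w k \<sigma> y \<le> P1_objective E w k \<sigma> y'"
    proof (cases "v \<in> V")
      case True
      obtain s where s: "s \<in> {1..k}" "P1_objective E w k \<sigma> y \<le> P1_objective E w k \<sigma> (y(v:=pt s))" "P1_feasible V k (y(v:=pt s))"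
        using better[OF assms(1,2) fy True assms(3), of w] by blast
      have "\<forall>i\<in>V - S. \<exists>u\<in>{1..k}. (y(v:=pt s)) i = pt u"
        using iy s(1) by auto
      then obtain y' where "P1_feasible V k y'" "\<forall>i\<in>V. \<exists>s\<in>{1..k}. y' i = pt s" "P1_objective E w k \<sigma> (y(v:=pt s)) \<le> P1_objective E w k \<sigma> y'"
        using insert.IH s(3) by blast
      then show ?thesis using s(2) by (meson order_trans)
    next
      case False
      then have "\<forall>i\<in>V - S. \<exists>s\<in>{1..k}. y i = pt s" using iy by auto
      then show ?thesis using insert.IH fy by blast
    qed
  qed
qed

lemma obj_cong:
  assumes "E \<subseteq> V \<times> V" "\<forall>(i,j)\<in>E. \<sigma> i j permutes {1..k}" "\<forall>i\<in>V. \<forall>t\<in>{1..k}. y i t = y' i t"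
  shows "P1_objective E w k \<sigma> y = P1_objective E w k \<sigma> y'"
proof -
  have h: "y i t = y' i t \<and> y j (\<sigma> i j t) = y' j (\<sigma> i j t)" if ij: "(i,j) \<in> E" and t: "t \<in> {1..k}" for i j t
  proof -
    have "\<sigma> i j t \<in> {1..k}" using ij t assms(2) permutes_in_image by fastforce
    moreover have "i \<in> V" "j \<in> V" using ij assms(1) by auto
    ultimately show ?thesis using assms(3) t by simp
  qed
  show ?thesis unfolding P1_objective_def
    by (intro arg_cong[where f="\<lambda>x. (1/4) * x"] sum.cong refl) (auto simp: h)
qed

lemma lp_pt: "labeling_point r i = pt (r i)"
  unfolding labeling_point_def pt_def by simp

lemma part1:
  assumes "\<forall>(i,j)\<in>E. \<sigma> i j permutes {1..k}" "E \<subseteq> V \<times> V" "is_labeling V k r"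
  shows "P1_feasible V k (labeling_point r) \<and> P1_objective E w k \<sigma> (labeling_point r) = labeling_value E w \<sigma> r"
proof
  have ptsum: "(\<Sum>t=1..k. pt s t) = 2 - real k" if "s \<in> {1..k}" for s
  proof -
    have "(\<Sum>t=1..k. pt s t) = (\<Sum>t=1..k. (if t = s then 2 else 0) + (-1::real))"
      by (intro sum.cong) (auto simp: pt_def)
    also have "\<dots> = 2 - real k" using that by (simp add: sum.distrib sum_subtractf)
    finally show ?thesis .
  qed
  show "P1_feasible V k (labeling_point r)"
    using assms(3) ptsum unfolding P1_feasible_def is_labeling_def lp_pt by (auto simp: pt_def)
  show "P1_objective E w k \<sigma> (labeling_point r) = labeling_value E w \<sigma> r"
    unfolding obj_alt labeling_value_def
  proof -
    have "(\<Sum>t=1..k. (1 + labeling_point r i t) * (1 + labeling_point r j (\<sigma> i j t)))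
       = (if r j = \<sigma> i j (r i) then 4 else 0)" if "(i,j) \<in> E" for i j
    proof -
      have ri: "r i \<in> {1..k}" using that assms(2,3) unfolding is_labeling_def by auto
      have "(\<Sum>t=1..k. (1 + labeling_point r i t) * (1 + labeling_point r j (\<sigma> i j t)))
         = (\<Sum>t=1..k. if t = r i then (if r j = \<sigma> i j (r i) then 4 else 0) else 0)"
        by (intro sum.cong) (auto simp: labeling_point_def)
      also have "\<dots> = (if r j = \<sigma> i j (r i) then 4 else 0)" using ri by simp
      finally show ?thesis .
    qed
    then have "(\<Sum>(i,j)\<in>E. w (i,j) * (\<Sum>t=1..k. (1 + labeling_point r i t) * (1 + labeling_point r j (\<sigma> i j t))))
       = (\<Sum>(i,j)\<in>E. 4 * (if r j = \<sigma> i j (r i) then w (i,j) else 0))"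
      by (intro sum.cong refl) auto
    also have "\<dots> = 4 * (\<Sum>(i,j)\<in>E. (if r j = \<sigma> i j (r i) then w (i,j) else 0))"
      by (rule sum_case_mult)
    finally show "1 / 4 * (\<Sum>(i,j)\<in>E. w (i,j) * (\<Sum>t=1..k. (1 + labeling_point r i t) * (1 + labeling_point r j (\<sigma> i j t))))
       = (\<Sum>(i,j)\<in>E. (if r j = \<sigma> i j (r i) then w (i,j) else 0))" by simp
  qed
qed

theorem theorem1:
  fixes V :: "'a set" and E :: "('a \<times> 'a) set" and w :: "'a \<times> 'a \<Rightarrow> real"
    and k :: nat and \<sigma> :: "'a \<Rightarrow> 'a \<Rightarrow> nat \<Rightarrow> nat"
  assumes "finite V"
    and "E \<subseteq> V \<times> V"
    and "\<forall>(i,j)\<in>E. i \<noteq> j"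
    and "\<forall>e\<in>E. w e > 0"
    and "k \<ge> 2"
    and "\<forall>(i,j)\<in>E. \<sigma> i j permutes {1..k}"
  shows "(\<forall>r. is_labeling V k r \<longrightarrow>
            P1_feasible V k (labeling_point r) \<and>
            P1_objective E w k \<sigma> (labeling_point r) = labeling_value E w \<sigma> r)
       \<and> (\<exists>y. P1_feasible V k y \<and> (\<forall>i\<in>V. \<forall>r\<in>{1..k}. y i r \<in> {-1, 1}) \<and>
            (\<forall>y'. P1_feasible V k y' \<longrightarrow> P1_objective E w k \<sigma> y' \<le> P1_objective E w k \<sigma> y))
       \<and> (\<forall>y. P1_feasible V k y \<longrightarrow> P1_objective E w k \<sigma> y \<le> ug_opt V E w k \<sigma>)
       \<and> (\<exists>y. P1_feasible V k y \<and> P1_objective E w k \<sigma> y = ug_opt V E w k \<sigma>)"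
proof -
  note A = assms
  have p1: "\<forall>r. is_labeling V k r \<longrightarrow> P1_feasible V k (labeling_point r) \<and>
            P1_objective E w k \<sigma> (labeling_point r) = labeling_value E w \<sigma> r"
    using part1[OF A(6) A(2)] by blast
  define L where "L = {labeling_value E w \<sigma> r | r. is_labeling V k r}"
  have Lsub: "L \<subseteq> (\<lambda>r. labeling_value E w \<sigma> r) ` (PiE V (\<lambda>_. {1..k}))"
  proof
    fix x assume "x \<in> L"
    then obtain r where r: "is_labeling V k r" "x = labeling_value E w \<sigma> r" unfolding L_def by blast
    have "restrict r V \<in> PiE V (\<lambda>_. {1..k})" using r(1) unfolding is_labeling_def by auto
    moreover have "labeling_value E w \<sigma> (restrict r V) = labeling_value E w \<sigma> r"
      unfolding labeling_value_def using A(2) by (intro sum.cong refl) auto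
    ultimately show "x \<in> (\<lambda>r. labeling_value E w \<sigma> r) ` (PiE V (\<lambda>_. {1..k}))" using r(2) by (metis image_eqI)
  qed
  have finL: "finite L" using Lsub A(1) by (meson finite_PiE finite_atLeastAtMost finite_imageI finite_subset)
  have "is_labeling V k (\<lambda>_. 1)" unfolding is_labeling_def using A(5) by auto
  then have neL: "L \<noteq> {}" unfolding L_def by blast
  have ug: "ug_opt V E w k \<sigma> = Max L" unfolding ug_opt_def L_def by simp
  have p3: "\<forall>y. P1_feasible V k y \<longrightarrow> P1_objective E w k \<sigma> y \<le> ug_opt V E w k \<sigma>"
  proof (intro allI impI)
    fix y assume fy: "P1_feasible V k y"
    obtain y' where y': "P1_feasible V k y'" "\<forall>i\<in>V. \<exists>s\<in>{1..k}. y' i = pt s" "P1_objective E w k \<sigma> y \<le> P1_objective E w k \<sigma> y'"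
      using integralize[OF A(3) A(6) _ A(1), of V w] A(5) fy by auto
    define r where "r i = (SOME s. s \<in> {1..k} \<and> y' i = pt s)" for i
    have r: "r i \<in> {1..k} \<and> y' i = pt (r i)" if "i \<in> V" for i
      unfolding r_def using y'(2) that by (metis (mono_tags, lifting) someI_ex)
    have lr: "is_labeling V k r" using r unfolding is_labeling_def by auto
    have "P1_objective E w k \<sigma> y' = P1_objective E w k \<sigma> (labeling_point r)"
      using r by (intro obj_cong[OF A(2) A(6)]) (auto simp: lp_pt)
    also have "\<dots> = labeling_value E w \<sigma> r" using p1 lr by blast
    also have "\<dots> \<le> Max L" using finL lr unfolding L_def by (intro Max_ge) auto
    finally show "P1_objective E w k \<sigma> y \<le> ug_opt V E w k \<sigma>" using y'(3) ug by simp
  qed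
  have "Max L \<in> L" using finL neL by simp
  then obtain r0 where r0: "is_labeling V k r0" "labeling_value E w \<sigma> r0 = Max L" unfolding L_def by auto
  have y0: "P1_feasible V k (labeling_point r0)" "P1_objective E w k \<sigma> (labeling_point r0) = ug_opt V E w k \<sigma>"
    using p1 r0 ug by auto
  have vals: "\<forall>i\<in>V. \<forall>r\<in>{1..k}. labeling_point r0 i r \<in> {-1, 1}" unfolding labeling_point_def by auto
  show ?thesis using p1 p3 y0 vals by metis
qed

end
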